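(* Let $0<\Delta\le1/10$ and $n\ge1$. Let $\alpha_{i,j}\in[-\Delta,0]$ and $\gamma_{i,j}\in[0,\Delta]$ for $1\le i,j\le n$. Consider the $(n+1)\times(n+1)$ bimatrix game with matrices $R,C$ given by: $R_{i,j}=1+\alpha_{i,j}$, $C_{i,j}=\gamma_{i,j}$ for $1\le i,j\le n$; $R_{i,n+1}=0$, $C_{i,n+1}=1$ for $1\le i\le n$; $R_{n+1,j}=0$, $C_{n+1,j}=2\Delta$ for $1\le j\le n$; and $R_{n+1,n+1}=2\Delta$, $C_{n+1,n+1}=0$. Then this game satisfies the strong $(\Delta^2,4\Delta)$-approximation stability condition. Moreover, every $\Delta^2$-equilibrium $(p,q)$ of this game satisfies $\Delta/2\le p_1+\dots+p_n\le4\Delta$ and $\Delta/2\le q_1+\dots+q_n\le4\Delta$.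
   Context: Mixed strategies $p,q$ are probability vectors in $\mathbb{R}^{n+1}$, payoffs $p^TRq$ and $p^TCq$, $e_i$ the $i$-th unit vector. $(p,q)$ is a Nash equilibrium if $e_i^TRq\le p^TRq$ and $p^TCe_j\le p^TCq$ for all $i,j$; an $\epsilon$-equilibrium if $e_i^TRq\le p^TRq+\epsilon$ and $p^TCe_j\le p^TCq+\epsilon$ for all $i,j$. Distance $d(p,p')=\frac12\sum_i|p_i-p'_i|$, $d((p,q),(p',q'))=\max(d(p,p'),d(q,q'))$; $\Delta$-close means distance $\le\Delta$. A game satisfies the strong $(\epsilon,\Delta)$-approximation stability condition if there is a Nash equilibrium $(p^*,q^* )$ of the game such that every $\epsilon$-equilibrium is $\Delta$-close to $(p^*,q^* )$. *)

theory Defs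
  imports "HOL-Analysis.Analysis"
begin

(* Strategies of an (m x m) bimatrix game are vectors indexed by {..<m}
   (i.e. 0-based; index k corresponds to the paper's index k+1). *)

definition prob_vec :: "nat \<Rightarrow> (nat \<Rightarrow> real) \<Rightarrow> bool" where
  "prob_vec m p \<longleftrightarrow> (\<forall>i<m. p i \<ge> 0) \<and> (\<Sum>i<m. p i) = 1"

definition unit_vec :: "nat \<Rightarrow> nat \<Rightarrow> real" where
  "unit_vec i = (\<lambda>k. if k = i then 1 else 0)"

definition payoff :: "nat \<Rightarrow> (nat \<Rightarrow> real) \<Rightarrow> (nat \<Rightarrow> nat \<Rightarrow> real) \<Rightarrow> (nat \<Rightarrow> real) \<Rightarrow> real" where
  "payoff m p A q = (\<Sum>i<m. \<Sum>j<m. p i * A i j * q j)"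

definition eps_equilibrium :: "nat \<Rightarrow> (nat \<Rightarrow> nat \<Rightarrow> real) \<Rightarrow> (nat \<Rightarrow> nat \<Rightarrow> real) \<Rightarrow> real
    \<Rightarrow> (nat \<Rightarrow> real) \<Rightarrow> (nat \<Rightarrow> real) \<Rightarrow> bool" where
  "eps_equilibrium m R C \<epsilon> p q \<longleftrightarrow> prob_vec m p \<and> prob_vec m q \<and>
     (\<forall>i<m. payoff m (unit_vec i) R q \<le> payoff m p R q + \<epsilon>) \<and>
     (\<forall>j<m. payoff m p C (unit_vec j) \<le> payoff m p C q + \<epsilon>)"

definition nash_equilibrium :: "nat \<Rightarrow> (nat \<Rightarrow> nat \<Rightarrow> real) \<Rightarrow> (nat \<Rightarrow> nat \<Rightarrow> real)
    \<Rightarrow> (nat \<Rightarrow> real) \<Rightarrow> (nat \<Rightarrow> real) \<Rightarrow> bool" where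
  "nash_equilibrium m R C p q \<longleftrightarrow> prob_vec m p \<and> prob_vec m q \<and>
     (\<forall>i<m. payoff m (unit_vec i) R q \<le> payoff m p R q) \<and>
     (\<forall>j<m. payoff m p C (unit_vec j) \<le> payoff m p C q)"

definition strat_dist :: "nat \<Rightarrow> (nat \<Rightarrow> real) \<Rightarrow> (nat \<Rightarrow> real) \<Rightarrow> real" where
  "strat_dist m p p' = (1/2) * (\<Sum>i<m. \<bar>p i - p' i\<bar>)"

definition profile_dist :: "nat \<Rightarrow> (nat \<Rightarrow> real) \<times> (nat \<Rightarrow> real) \<Rightarrow> (nat \<Rightarrow> real) \<times> (nat \<Rightarrow> real) \<Rightarrow> real" where
  "profile_dist m pq pq' = max (strat_dist m (fst pq) (fst pq')) (strat_dist m (snd pq) (snd pq'))"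

definition strong_approx_stable :: "nat \<Rightarrow> (nat \<Rightarrow> nat \<Rightarrow> real) \<Rightarrow> (nat \<Rightarrow> nat \<Rightarrow> real)
    \<Rightarrow> real \<Rightarrow> real \<Rightarrow> bool" where
  "strong_approx_stable m R C \<epsilon> \<Delta> \<longleftrightarrow>
     (\<exists>ps qs. nash_equilibrium m R C ps qs \<and>
        (\<forall>p q. eps_equilibrium m R C \<epsilon> p q \<longrightarrow> profile_dist m (p, q) (ps, qs) \<le> \<Delta>))"

end

theory Submission
  imports Defs
begin


lemma bw_multi:
  fixes x :: "nat \<Rightarrow> nat \<Rightarrow> real"
  assumes "\<And>k i. i < N \<Longrightarrow> \<bar>x k i\<bar> \<le> B"
  shows "\<exists>\<sigma> z. strict_mono \<sigma> \<and> (\<forall>i<N. (\<lambda>k. x (\<sigma> k) i) \<longlonglongrightarrow> z i)"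
  using assms
proof (induction N)
  case 0
  show ?case by (rule exI[of _ id]) (auto simp: strict_mono_def)
next
  case (Suc N)
  then obtain \<sigma> z where \<sigma>: "strict_mono \<sigma>" and z: "\<forall>i<N. (\<lambda>k. x (\<sigma> k) i) \<longlonglongrightarrow> z i"
    by (metis less_SucI)
  have "bounded (range (\<lambda>k. x (\<sigma> k) N))"
    unfolding bounded_real using Suc.prems by blast
  then obtain l r where r: "strict_mono r" "((\<lambda>k. x (\<sigma> k) N) \<circ> r) \<longlonglongrightarrow> l"
    using bounded_imp_convergent_subsequence by blast
  show ?case
  proof (intro exI conjI allI impI)
    show "strict_mono (\<sigma> \<circ> r)" using \<sigma> r strict_mono_o by blast
    fix i assume i: "i < Suc N"
    show "(\<lambda>k. x ((\<sigma> \<circ> r) k) i) \<longlonglongrightarrow> (z(N := l)) i"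
    proof (cases "i = N")
      case True then show ?thesis using r(2) by (simp add: o_def)
    next
      case False
      then have "i < N" using i by simp
      have "((\<lambda>k. x (\<sigma> k) i) \<circ> r) \<longlonglongrightarrow> z i"
        using LIMSEQ_subseq_LIMSEQ[OF z[rule_format, OF \<open>i<N\<close>] r(1)] .
      then show ?thesis using False by (simp add: o_def)
    qed
  qed
qed



definition cube :: "nat \<Rightarrow> (nat \<Rightarrow> real) set" where
  "cube N = {x. \<forall>i<N. 0 \<le> x i \<and> x i \<le> 1}"

definition seqcont :: "nat \<Rightarrow> ((nat \<Rightarrow> real) \<Rightarrow> (nat \<Rightarrow> real)) \<Rightarrow> bool" where
  "seqcont N f \<longleftrightarrow> (\<forall>xs z. (\<forall>k. xs k \<in> cube N) \<longrightarrow> z \<in> cube N \<longrightarrow>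
      (\<forall>i<N. (\<lambda>k. xs k i) \<longlonglongrightarrow> z i) \<longrightarrow> (\<forall>i<N. (\<lambda>k. f (xs k) i) \<longlonglongrightarrow> f z i))"

lemma brouwer_nat:
  assumes fc: "\<forall>x\<in>cube N. f x \<in> cube N" and sc: "seqcont N f"
  shows "\<exists>x\<in>cube N. \<forall>i<N. f x i = x i"
proof -
  define pt where "pt p (r::nat\<Rightarrow>nat) = (\<lambda>j. if j < N then real (r j) / real p else 0)" for p r
  define lab where "lab y i = (if y i = 1 then 1 else if y i \<le> f y i then 0 else (1::nat))" for y i
  have ptc: "pt p r \<in> cube N" if "\<forall>j<N. r j \<le> p" "0 < p" for p r
    using that by (auto simp: pt_def cube_def)
  have lab1: "f y i \<le> y i" if "y\<in>cube N" "i<N" "lab y i = 1" for y i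
    using that fc unfolding lab_def cube_def by (auto split: if_splits)
  have lab0: "y i \<le> f y i" if "lab y i = 0" for y i
    using that unfolding lab_def by (auto split: if_splits)
  define G where "G k q = ((\<forall>i<N. q i < Suc k) \<and> (\<forall>i<N. \<exists>r s. (\<forall>j<N. q j \<le> r j \<and> r j \<le> q j + 1) \<and>
           (\<forall>j<N. q j \<le> s j \<and> s j \<le> q j + 1) \<and> lab (pt (Suc k) r) i \<noteq> lab (pt (Suc k) s) i))" for k q
  have "\<forall>k. \<exists>q. G k q"
    unfolding G_def
  proof
    fix k
    have h1: "\<forall>x. (\<forall>i<N. x i \<le> Suc k) \<longrightarrow> (\<forall>i<N. lab (pt (Suc k) x) i = 0 \<or> lab (pt (Suc k) x) i = 1)"
      by (auto simp: lab_def)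
    have h2: "\<forall>x. (\<forall>i<N. x i \<le> Suc k) \<longrightarrow> (\<forall>i<N. x i = 0 \<longrightarrow> lab (pt (Suc k) x) i = 0)"
    proof (intro allI impI)
      fix x i assume a: "\<forall>i<N. x i \<le> Suc k" "i < N" "x i = 0"
      have "pt (Suc k) x \<in> cube N" using ptc a by blast
      then have "0 \<le> f (pt (Suc k) x) i" using fc a unfolding cube_def by blast
      then show "lab (pt (Suc k) x) i = 0" using a by (simp add: lab_def pt_def)
    qed
    have h3: "\<forall>x. (\<forall>i<N. x i \<le> Suc k) \<longrightarrow> (\<forall>i<N. x i = Suc k \<longrightarrow> lab (pt (Suc k) x) i = 1)"
      by (auto simp: lab_def pt_def)
    obtain q where "\<forall>i<N. q i < Suc k" "\<forall>i<N. \<exists>r s. (\<forall>j<N. q j \<le> r j \<and> r j \<le> q j + 1) \<and>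
           (\<forall>j<N. q j \<le> s j \<and> s j \<le> q j + 1) \<and> lab (pt (Suc k) r) i \<noteq> lab (pt (Suc k) s) i"
      by (rule kuhn_lemma[of "Suc k" N "\<lambda>x i. lab (pt (Suc k) x) i", OF zero_less_Suc h1 h2 h3])
    then show "\<exists>q. (\<forall>i<N. q i < Suc k) \<and> (\<forall>i<N. \<exists>r s. (\<forall>j<N. q j \<le> r j \<and> r j \<le> q j + 1) \<and>
           (\<forall>j<N. q j \<le> s j \<and> s j \<le> q j + 1) \<and> lab (pt (Suc k) r) i \<noteq> lab (pt (Suc k) s) i)" by blast
  qed
  then obtain Q where "\<forall>k. G k (Q k)" by (rule choice[THEN exE])
  then obtain Q where Q1: "\<And>k i. i < N \<Longrightarrow> Q k i < Suc k"
    and Q2: "\<And>k i. i<N \<Longrightarrow> \<exists>r s. (\<forall>j<N. Q k j \<le> r j \<and> r j \<le> Q k j + 1) \<and>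
           (\<forall>j<N. Q k j \<le> s j \<and> s j \<le> Q k j + 1) \<and> lab (pt (Suc k) r) i \<noteq> lab (pt (Suc k) s) i"
    unfolding G_def by blast
  define rr where "rr k i = (SOME r. \<exists>s. (\<forall>j<N. Q k j \<le> r j \<and> r j \<le> Q k j + 1) \<and>
           (\<forall>j<N. Q k j \<le> s j \<and> s j \<le> Q k j + 1) \<and> lab (pt (Suc k) r) i \<noteq> lab (pt (Suc k) s) i)" for k i
  define ss where "ss k i = (SOME s. (\<forall>j<N. Q k j \<le> rr k i j \<and> rr k i j \<le> Q k j + 1) \<and>
           (\<forall>j<N. Q k j \<le> s j \<and> s j \<le> Q k j + 1) \<and> lab (pt (Suc k) (rr k i)) i \<noteq> lab (pt (Suc k) s) i)" for k i
  have RS: "(\<forall>j<N. Q k j \<le> rr k i j \<and> rr k i j \<le> Q k j + 1) \<and>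
           (\<forall>j<N. Q k j \<le> ss k i j \<and> ss k i j \<le> Q k j + 1) \<and> lab (pt (Suc k) (rr k i)) i \<noteq> lab (pt (Suc k) (ss k i)) i"
    if "i < N" for k i
  proof -
    have "\<exists>s. (\<forall>j<N. Q k j \<le> rr k i j \<and> rr k i j \<le> Q k j + 1) \<and>
           (\<forall>j<N. Q k j \<le> s j \<and> s j \<le> Q k j + 1) \<and> lab (pt (Suc k) (rr k i)) i \<noteq> lab (pt (Suc k) s) i"
      unfolding rr_def using someI_ex[OF Q2[OF that]] .
    then show ?thesis unfolding ss_def by (rule someI_ex)
  qed
  define z where "z k = pt (Suc k) (Q k)" for k
  have zc: "z k \<in> cube N" for k
    unfolding z_def by (intro ptc allI impI zero_less_Suc less_imp_le Q1)
  obtain \<sigma> z0 where \<sigma>: "strict_mono \<sigma>" and z0: "\<forall>i<N. (\<lambda>k. z (\<sigma> k) i) \<longlonglongrightarrow> z0 i"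
  proof -
    have "\<And>k i. i < N \<Longrightarrow> \<bar>z k i\<bar> \<le> 1" 
    proof -
      fix k i assume "i < N"
      then have "0 \<le> z k i \<and> z k i \<le> 1" using zc[of k] unfolding cube_def by blast
      then show "\<bar>z k i\<bar> \<le> 1" by linarith
    qed
    then show ?thesis using bw_multi[of N z 1] that by blast
  qed
  have z0c: "z0 \<in> cube N"
    unfolding cube_def
  proof (intro CollectI allI impI conjI)
    fix i assume i: "i < N"
    show "0 \<le> z0 i"
      by (rule LIMSEQ_le_const[OF z0[rule_format, OF i]]) (use zc i in \<open>simp add: cube_def\<close>)
    show "z0 i \<le> 1"
      by (rule LIMSEQ_le_const2[OF z0[rule_format, OF i]]) (use zc i in \<open>simp add: cube_def\<close>)
  qed
  have inv0: "(\<lambda>k. 1 / real (Suc (\<sigma> k))) \<longlonglongrightarrow> 0"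
  proof -
    have "(\<lambda>n. 1 / real (Suc n)) \<longlonglongrightarrow> 0"
      using LIMSEQ_inverse_real_of_nat by (simp add: inverse_eq_divide)
    from LIMSEQ_subseq_LIMSEQ[OF this \<sigma>] show ?thesis by (simp add: o_def)
  qed
  have near: "(\<lambda>k. pt (Suc (\<sigma> k)) (w k) j) \<longlonglongrightarrow> z0 j"
    if j: "j < N" and w: "\<And>k. Q (\<sigma> k) j \<le> w k j \<and> w k j \<le> Q (\<sigma> k) j + 1" for w j
  proof -
    have "(\<lambda>k. pt (Suc (\<sigma> k)) (w k) j - z (\<sigma> k) j) \<longlonglongrightarrow> 0"
    proof (rule Lim_null_comparison[OF _ inv0], rule always_eventually, rule allI)
      fix k
      have "real (Q (\<sigma> k) j) \<le> real (w k j)" "real (w k j) \<le> real (Q (\<sigma> k) j) + 1"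
        using w[of k] by auto
      then show "norm (pt (Suc (\<sigma> k)) (w k) j - z (\<sigma> k) j) \<le> 1 / real (Suc (\<sigma> k))"
      proof -
        have e: "pt (Suc (\<sigma> k)) (w k) j - z (\<sigma> k) j = (real (w k j) - real (Q (\<sigma> k) j)) / real (Suc (\<sigma> k))"
          using j by (simp add: pt_def z_def diff_divide_distrib)
        have "\<bar>(real (w k j) - real (Q (\<sigma> k) j)) / real (Suc (\<sigma> k))\<bar> = (real (w k j) - real (Q (\<sigma> k) j)) / real (Suc (\<sigma> k))"
          using \<open>real (Q (\<sigma> k) j) \<le> real (w k j)\<close> by simp
        also have "\<dots> \<le> 1 / real (Suc (\<sigma> k))"
          by (rule divide_right_mono) (use \<open>real (w k j) \<le> real (Q (\<sigma> k) j) + 1\<close> in auto)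
        finally show ?thesis using e by simp
      qed
    qed
    from tendsto_add[OF this z0[rule_format, OF j]] show ?thesis by simp
  qed
  show ?thesis
  proof (intro bexI[OF _ z0c] allI impI)
    fix i assume i: "i < N"
    define a where "a k = pt (Suc (\<sigma> k)) (rr (\<sigma> k) i)" for k
    define b where "b k = pt (Suc (\<sigma> k)) (ss (\<sigma> k) i)" for k
    have ac: "a k \<in> cube N" for k
      unfolding a_def
    proof (rule ptc)
      show "\<forall>j<N. rr (\<sigma> k) i j \<le> Suc (\<sigma> k)"
      proof (intro allI impI)
        fix j assume j: "j < N"
        have "rr (\<sigma> k) i j \<le> Q (\<sigma> k) j + 1" using RS[OF i, of "\<sigma> k"] j by blast
        moreover have "Q (\<sigma> k) j < Suc (\<sigma> k)" using Q1[OF j] .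
        ultimately show "rr (\<sigma> k) i j \<le> Suc (\<sigma> k)" by linarith
      qed
    qed simp
    have bc: "b k \<in> cube N" for k
      unfolding b_def
    proof (rule ptc)
      show "\<forall>j<N. ss (\<sigma> k) i j \<le> Suc (\<sigma> k)"
      proof (intro allI impI)
        fix j assume j: "j < N"
        have "ss (\<sigma> k) i j \<le> Q (\<sigma> k) j + 1" using RS[OF i, of "\<sigma> k"] j by blast
        moreover have "Q (\<sigma> k) j < Suc (\<sigma> k)" using Q1[OF j] .
        ultimately show "ss (\<sigma> k) i j \<le> Suc (\<sigma> k)" by linarith
      qed
    qed simp
    have al: "\<forall>j<N. (\<lambda>k. a k j) \<longlonglongrightarrow> z0 j"
      unfolding a_def using RS[OF i] by (intro allI impI near) auto
    have bl: "\<forall>j<N. (\<lambda>k. b k j) \<longlonglongrightarrow> z0 j"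
      unfolding b_def using RS[OF i] by (intro allI impI near) auto
    have fa: "(\<lambda>k. f (a k) i - a k i) \<longlonglongrightarrow> f z0 i - z0 i"
    proof (rule tendsto_diff)
      from sc[unfolded seqcont_def, rule_format, OF ac z0c al[rule_format] i]
      show "(\<lambda>k. f (a k) i) \<longlonglongrightarrow> f z0 i" .
      show "(\<lambda>k. a k i) \<longlonglongrightarrow> z0 i" using al i by blast
    qed
    have fb: "(\<lambda>k. f (b k) i - b k i) \<longlonglongrightarrow> f z0 i - z0 i"
    proof (rule tendsto_diff)
      from sc[unfolded seqcont_def, rule_format, OF bc z0c bl[rule_format] i]
      show "(\<lambda>k. f (b k) i) \<longlonglongrightarrow> f z0 i" .
      show "(\<lambda>k. b k i) \<longlonglongrightarrow> z0 i" using bl i by blast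
    qed
    have mm: "min (f (a k) i - a k i) (f (b k) i - b k i) \<le> 0 \<and> 0 \<le> max (f (a k) i - a k i) (f (b k) i - b k i)" for k
    proof -
      have d: "lab (a k) i \<noteq> lab (b k) i" using RS[OF i, of "\<sigma> k"] by (simp add: a_def b_def)
      have "lab (a k) i = 0 \<or> lab (a k) i = 1" "lab (b k) i = 0 \<or> lab (b k) i = 1" by (auto simp: lab_def)
      then have "(0 \<le> f (a k) i - a k i \<and> f (b k) i - b k i \<le> 0) \<or> (f (a k) i - a k i \<le> 0 \<and> 0 \<le> f (b k) i - b k i)"
        using d lab0[of "a k" i] lab0[of "b k" i] lab1[OF ac i] lab1[OF bc i] by force
      then show ?thesis by linarith
    qed
    have "min (f z0 i - z0 i) (f z0 i - z0 i) \<le> 0"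
      by (rule LIMSEQ_le_const2[OF tendsto_min[OF fa fb]]) (use mm in auto)
    moreover have "0 \<le> max (f z0 i - z0 i) (f z0 i - z0 i)"
      by (rule LIMSEQ_le_const[OF tendsto_max[OF fa fb]]) (use mm in auto)
    ultimately show "f z0 i = z0 i" by simp
  qed
qed



lemma payoff_unit_row: assumes "i < m" shows "payoff m (unit_vec i) A q = (\<Sum>j<m. A i j * q j)"
proof -
  have "payoff m (unit_vec i) A q = (\<Sum>i'<m. unit_vec i i' * (\<Sum>j<m. A i' j * q j))"
    unfolding payoff_def by (simp add: sum_distrib_left mult.assoc)
  also have "\<dots> = (\<Sum>i'<m. if i' = i then (\<Sum>j<m. A i' j * q j) else 0)"
    by (rule sum.cong) (auto simp: unit_vec_def)
  also have "\<dots> = (\<Sum>j<m. A i j * q j)" using assms by (simp add: sum.delta)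
  finally show ?thesis .
qed

lemma payoff_unit_col: assumes "j < m" shows "payoff m p A (unit_vec j) = (\<Sum>i<m. p i * A i j)"
proof -
  have "payoff m p A (unit_vec j) = (\<Sum>i<m. p i * (\<Sum>j'<m. A i j' * unit_vec j j'))"
    unfolding payoff_def by (simp add: sum_distrib_left mult.assoc)
  also have "\<dots> = (\<Sum>i<m. p i * A i j)"
  proof (rule sum.cong[OF refl])
    fix i
    have "(\<Sum>j'<m. A i j' * unit_vec j j') = (\<Sum>j'<m. if j' = j then A i j' else 0)"
      by (rule sum.cong) (auto simp: unit_vec_def)
    also have "\<dots> = A i j" using assms by (simp add: sum.delta)
    finally show "p i * (\<Sum>j'<m. A i j' * unit_vec j j') = p i * A i j" by simp
  qed
  finally show ?thesis .
qed

lemma payoff_rows: "payoff m p A q = (\<Sum>i<m. p i * payoff m (unit_vec i) A q)"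
proof -
  have "payoff m p A q = (\<Sum>i<m. p i * (\<Sum>j<m. A i j * q j))"
    unfolding payoff_def by (simp add: sum_distrib_left mult.assoc)
  also have "\<dots> = (\<Sum>i<m. p i * payoff m (unit_vec i) A q)"
    by (rule sum.cong) (simp_all add: payoff_unit_row)
  finally show ?thesis .
qed

lemma payoff_cols: "payoff m p A q = (\<Sum>j<m. payoff m p A (unit_vec j) * q j)"
proof -
  have "payoff m p A q = (\<Sum>j<m. \<Sum>i<m. p i * A i j * q j)"
    unfolding payoff_def by (rule sum.swap)
  also have "\<dots> = (\<Sum>j<m. (\<Sum>i<m. p i * A i j) * q j)"
    by (simp add: sum_distrib_right)
  also have "\<dots> = (\<Sum>j<m. payoff m p A (unit_vec j) * q j)"
    by (rule sum.cong) (simp_all add: payoff_unit_col)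
  finally show ?thesis .
qed



definition pr :: "nat \<Rightarrow> (nat \<Rightarrow> real) \<Rightarrow> nat \<Rightarrow> real" where
  "pr m x = (\<lambda>i. (x i + max 0 (1 - (\<Sum>j<m. x j)) / real m) / max 1 (\<Sum>j<m. x j))"

lemma pr_prob:
  assumes m: "m \<ge> 1" and x: "\<And>i. i < m \<Longrightarrow> 0 \<le> x i"
  shows "prob_vec m (pr m x)"
proof -
  define S where "S = (\<Sum>j<m. x j)"
  have S0: "S \<ge> 0" unfolding S_def by (rule sum_nonneg) (simp add: x)
  have "(\<Sum>i<m. pr m x i) = (\<Sum>i<m. x i + max 0 (1 - S) / real m) / max 1 S"
    unfolding pr_def S_def by (simp add: sum_divide_distrib)
  also have "\<dots> = (S + max 0 (1 - S)) / max 1 S"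
    using m by (simp add: sum.distrib S_def)
  also have "\<dots> = 1"
    by (cases "S \<le> 1") (auto simp: max_def)
  finally have "(\<Sum>i<m. pr m x i) = 1" .
  moreover have "\<forall>i<m. 0 \<le> pr m x i"
    using x unfolding pr_def by (auto intro!: divide_nonneg_pos add_nonneg_nonneg)
  ultimately show ?thesis unfolding prob_vec_def by blast
qed

lemma pr_id: "prob_vec m x \<Longrightarrow> pr m x = x"
  unfolding prob_vec_def pr_def by (auto simp: fun_eq_iff)

lemma prob_vec_le1: assumes "prob_vec m x" "i < m" shows "x i \<le> 1"
proof -
  have "x i \<le> (\<Sum>j<m. x j)" by (rule member_le_sum) (use assms in \<open>auto simp: prob_vec_def\<close>)
  then show ?thesis using assms by (simp add: prob_vec_def)
qed

lemma pr_tendsto: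
  assumes "\<And>j. j < m \<Longrightarrow> (\<lambda>k. y k j) \<longlonglongrightarrow> w j" and "(\<lambda>k. y k i) \<longlonglongrightarrow> w i" and "m \<ge> 1"
  shows "(\<lambda>k. pr m (y k) i) \<longlonglongrightarrow> pr m w i"
proof -
  have S: "(\<lambda>k. \<Sum>j<m. y k j) \<longlonglongrightarrow> (\<Sum>j<m. w j)"
    by (rule tendsto_sum) (use assms(1) in auto)
  have "max 1 (\<Sum>j<m. w j) \<noteq> 0" by (simp add: max_def)
  moreover have "real m \<noteq> 0" using assms(3) by simp
  ultimately show ?thesis unfolding pr_def
    by (intro tendsto_divide tendsto_add tendsto_max tendsto_diff tendsto_const S assms(2)) auto
qed

lemma payoff_tendsto:
  assumes "\<And>j. j < m \<Longrightarrow> (\<lambda>k. P k j) \<longlonglongrightarrow> P0 j" and "\<And>j. j < m \<Longrightarrow> (\<lambda>k. Q k j) \<longlonglongrightarrow> Q0 j"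
  shows "(\<lambda>k. payoff m (P k) A (Q k)) \<longlonglongrightarrow> payoff m P0 A Q0"
  unfolding payoff_def
  by (intro tendsto_sum tendsto_mult tendsto_const assms) auto

definition nmap :: "nat \<Rightarrow> (nat \<Rightarrow> real) \<Rightarrow> (nat \<Rightarrow> real) \<Rightarrow> nat \<Rightarrow> real" where
  "nmap m P g = (\<lambda>i. (P i + g i) / (1 + (\<Sum>k<m. g k)))"

lemma nmap_prob:
  assumes "prob_vec m P" "\<And>i. i < m \<Longrightarrow> 0 \<le> g i"
  shows "prob_vec m (nmap m P g)"
proof -
  define G where "G = (\<Sum>k<m. g k)"
  have G0: "G \<ge> 0" unfolding G_def by (rule sum_nonneg) (simp add: assms(2))
  have "(\<Sum>i<m. nmap m P g i) = (\<Sum>i<m. P i + g i) / (1 + G)"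
    unfolding nmap_def G_def by (simp add: sum_divide_distrib)
  also have "\<dots> = 1" using assms(1) G0 unfolding prob_vec_def by (simp add: sum.distrib G_def)
  finally have "(\<Sum>i<m. nmap m P g i) = 1" .
  moreover have "\<forall>i<m. 0 \<le> nmap m P g i"
    using assms G0 unfolding nmap_def prob_vec_def G_def
    by (auto intro!: divide_nonneg_pos add_nonneg_nonneg add_pos_nonneg sum_nonneg)
  ultimately show ?thesis unfolding prob_vec_def by blast
qed

lemma nmap_tendsto:
  assumes "(\<lambda>k. P k i) \<longlonglongrightarrow> P0 i" "\<And>j. j < m \<Longrightarrow> (\<lambda>k. g k j) \<longlonglongrightarrow> g0 j"
    and "(\<lambda>k. g k i) \<longlonglongrightarrow> g0 i" and "\<And>j. j < m \<Longrightarrow> 0 \<le> g0 j"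
  shows "(\<lambda>k. nmap m (P k) (g k) i) \<longlonglongrightarrow> nmap m P0 g0 i"
proof -
  have S: "(\<lambda>k. \<Sum>j<m. g k j) \<longlonglongrightarrow> (\<Sum>j<m. g0 j)"
    by (rule tendsto_sum) (use assms(2) in auto)
  have "1 + (\<Sum>j<m. g0 j) \<noteq> 0" using assms(4) sum_nonneg[of "{..<m}" g0]
    by (metis add_pos_nonneg lessThan_iff less_numeral_extra(1) less_numeral_extra(3))
  then show ?thesis unfolding nmap_def
    by (intro tendsto_divide tendsto_add tendsto_const S assms(1,3)) auto
qed

lemma nmap_fix:
  assumes P: "prob_vec m P" and fx: "\<And>i. i < m \<Longrightarrow> nmap m P g i = P i"
    and g: "\<And>i. i < m \<Longrightarrow> g i = max 0 (u i - v)" and v: "v = (\<Sum>i<m. P i * u i)"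
  shows "\<forall>i<m. u i \<le> v"
proof -
  define G where "G = (\<Sum>k<m. g k)"
  have g0: "\<And>i. i < m \<Longrightarrow> 0 \<le> g i" using g by simp
  have G0: "G \<ge> 0" unfolding G_def by (rule sum_nonneg) (simp add: g0)
  have eq: "G * P i = g i" if "i < m" for i
  proof -
    have "(P i + g i) / (1 + G) = P i" using fx[OF that] unfolding nmap_def G_def by simp
    then have "P i + g i = P i * (1 + G)" using G0 by (simp add: field_simps)
    then show ?thesis by (simp add: algebra_simps)
  qed
  have "\<exists>i<m. 0 < P i \<and> u i \<le> v"
  proof (rule ccontr)
    assume "\<not> ?thesis"
    then have h2: "\<And>i. i < m \<Longrightarrow> 0 < P i \<Longrightarrow> P i * (u i - v) > 0"
      using P unfolding prob_vec_def by (auto simp: not_le)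
    have h: "P i * (u i - v) \<ge> 0" if "i < m" for i
    proof (cases "P i = 0")
      case False
      then have "0 < P i" using P that unfolding prob_vec_def by force
      then show ?thesis using h2[OF that] by simp
    qed simp
    have "(\<Sum>i<m. P i) = 1" using P unfolding prob_vec_def by simp
    then obtain i0 where i0: "i0 < m" "P i0 > 0"
      using P unfolding prob_vec_def
      by (metis (no_types, lifting) lessThan_iff order_le_less sum.neutral zero_neq_one)
    have "(\<Sum>i<m. P i * (u i - v)) > 0"
      using h h2 i0 by (intro sum_pos2[of "{..<m}" i0]) auto
    moreover have "(\<Sum>i<m. P i * (u i - v)) = (\<Sum>i<m. P i * u i) - (\<Sum>i<m. P i) * v"
      by (simp add: right_diff_distrib sum_subtractf sum_distrib_right)
    ultimately show False using \<open>(\<Sum>i<m. P i) = 1\<close> v by simp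
  qed
  then obtain i where i: "i < m" "0 < P i" "u i \<le> v" by blast
  then have "g i = 0" using g by simp
  then have "G = 0" using eq[OF i(1)] i(2) by simp
  then have "\<forall>k<m. g k = 0" unfolding G_def using g0 sum_nonneg_eq_0_iff[of "{..<m}" g]
    by simp
  then show ?thesis using g by (metis max.bounded_iff order_refl diff_le_0_iff_le) 
qed



definition gR :: "nat \<Rightarrow> (nat \<Rightarrow> nat \<Rightarrow> real) \<Rightarrow> (nat \<Rightarrow> real) \<Rightarrow> (nat \<Rightarrow> real) \<Rightarrow> nat \<Rightarrow> real" where
  "gR m A P Q = (\<lambda>i. max 0 (payoff m (unit_vec i) A Q - payoff m P A Q))"
definition gC :: "nat \<Rightarrow> (nat \<Rightarrow> nat \<Rightarrow> real) \<Rightarrow> (nat \<Rightarrow> real) \<Rightarrow> (nat \<Rightarrow> real) \<Rightarrow> nat \<Rightarrow> real" where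
  "gC m B P Q = (\<lambda>j. max 0 (payoff m P B (unit_vec j) - payoff m P B Q))"
definition shft :: "nat \<Rightarrow> (nat \<Rightarrow> real) \<Rightarrow> nat \<Rightarrow> real" where
  "shft m x = (\<lambda>j. x (m + j))"
definition Fn :: "nat \<Rightarrow> (nat \<Rightarrow> nat \<Rightarrow> real) \<Rightarrow> (nat \<Rightarrow> nat \<Rightarrow> real) \<Rightarrow> (nat \<Rightarrow> real) \<Rightarrow> nat \<Rightarrow> real" where
  "Fn m R C x = (\<lambda>i. if i < m then nmap m (pr m x) (gR m R (pr m x) (pr m (shft m x))) i
                     else nmap m (pr m (shft m x)) (gC m C (pr m x) (pr m (shft m x))) (i - m))"

lemma prob_vec_cong: "prob_vec m a \<Longrightarrow> (\<And>i. i < m \<Longrightarrow> b i = a i) \<Longrightarrow> prob_vec m b"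
  unfolding prob_vec_def by (metis (no_types, lifting) lessThan_iff sum.cong)

lemma nash_exists:
  assumes m: "m \<ge> 1"
  shows "\<exists>p q. nash_equilibrium m R C p q"
proof -
  have probs: "prob_vec m (pr m x) \<and> prob_vec m (pr m (shft m x))" if "x \<in> cube (2*m)" for x
    using that m unfolding cube_def shft_def by (auto intro!: pr_prob)
  have gR0: "0 \<le> gR m R P Q i" for P Q i by (simp add: gR_def)
  have gC0: "0 \<le> gC m C P Q i" for P Q i by (simp add: gC_def)
  have Fc: "\<forall>x\<in>cube (2*m). Fn m R C x \<in> cube (2*m)"
  proof
    fix x assume x: "x \<in> cube (2*m)"
    have a: "prob_vec m (nmap m (pr m x) (gR m R (pr m x) (pr m (shft m x))))"
      using probs[OF x] gR0 by (intro nmap_prob) auto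
    have b: "prob_vec m (nmap m (pr m (shft m x)) (gC m C (pr m x) (pr m (shft m x))))"
      using probs[OF x] gC0 by (intro nmap_prob) auto
    show "Fn m R C x \<in> cube (2*m)"
      unfolding cube_def
    proof (intro CollectI allI impI)
      fix i assume i: "i < 2*m"
      show "0 \<le> Fn m R C x i \<and> Fn m R C x i \<le> 1"
      proof (cases "i < m")
        case True
        then show ?thesis using a prob_vec_le1[OF a True] unfolding Fn_def prob_vec_def by simp
      next
        case False
        then have "i - m < m" using i by simp
        then show ?thesis using b prob_vec_le1[OF b] False unfolding Fn_def prob_vec_def by simp
      qed
    qed
  qed
  have sc: "seqcont (2*m) (Fn m R C)"
    unfolding seqcont_def
  proof (intro allI impI)
    fix xs :: "nat \<Rightarrow> nat \<Rightarrow> real" and z i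
    assume "\<forall>k. xs k \<in> cube (2*m)" "z \<in> cube (2*m)" and conv: "\<forall>i<2*m. (\<lambda>k. xs k i) \<longlonglongrightarrow> z i" and i: "i < 2*m"
    have Pc: "(\<lambda>k. pr m (xs k) j) \<longlonglongrightarrow> pr m z j" if "j < m" for j
      using that conv m by (intro pr_tendsto) auto
    have Qc: "(\<lambda>k. pr m (shft m (xs k)) j) \<longlonglongrightarrow> pr m (shft m z) j" if "j < m" for j
      using that conv m unfolding shft_def by (intro pr_tendsto) auto
    have uc: "(\<lambda>k. unit_vec l j) \<longlonglongrightarrow> unit_vec l j" for l j by simp
    have gRc: "(\<lambda>k. gR m R (pr m (xs k)) (pr m (shft m (xs k))) j) \<longlonglongrightarrow> gR m R (pr m z) (pr m (shft m z)) j" for j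
      unfolding gR_def
      by (intro tendsto_max tendsto_const tendsto_diff payoff_tendsto Pc Qc uc)
    have gCc: "(\<lambda>k. gC m C (pr m (xs k)) (pr m (shft m (xs k))) j) \<longlonglongrightarrow> gC m C (pr m z) (pr m (shft m z)) j" for j
      unfolding gC_def
      by (intro tendsto_max tendsto_const tendsto_diff payoff_tendsto Pc Qc uc)
    show "(\<lambda>k. Fn m R C (xs k) i) \<longlonglongrightarrow> Fn m R C z i"
    proof (cases "i < m")
      case True
      then show ?thesis unfolding Fn_def
        by (simp, intro nmap_tendsto Pc gRc gR0)
    next
      case False
      then have "i - m < m" using i by simp
      then show ?thesis using False unfolding Fn_def
        by (simp, intro nmap_tendsto Qc gCc gC0)
    qed
  qed
  obtain x where x: "x \<in> cube (2*m)" and fx: "\<And>i. i < 2*m \<Longrightarrow> Fn m R C x i = x i"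
    using brouwer_nat[OF Fc sc] by blast
  define p where "p = pr m x"
  define q where "q = pr m (shft m x)"
  have a: "prob_vec m (nmap m p (gR m R p q))"
    using probs[OF x] gR0 unfolding p_def q_def by (intro nmap_prob) auto
  have b: "prob_vec m (nmap m q (gC m C p q))"
    using probs[OF x] gC0 unfolding p_def q_def by (intro nmap_prob) auto
  have xa: "x i = nmap m p (gR m R p q) i" if "i < m" for i
    using fx[of i] that unfolding Fn_def p_def q_def by simp
  have xb: "shft m x j = nmap m q (gC m C p q) j" if "j < m" for j
    using fx[of "m + j"] that unfolding Fn_def p_def q_def shft_def by simp
  have px: "prob_vec m x" using prob_vec_cong[OF a] xa by blast
  have qx: "prob_vec m (shft m x)" using prob_vec_cong[OF b] xb by blast
  have pp: "p = x" unfolding p_def using pr_id[OF px] .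
  have qq: "q = shft m x" unfolding q_def using pr_id[OF qx] .
  have rowNE: "\<forall>i<m. payoff m (unit_vec i) R q \<le> payoff m p R q"
  proof (rule nmap_fix[where g = "gR m R p q"])
    show "prob_vec m p" using px pp by simp
    show "\<And>i. i < m \<Longrightarrow> nmap m p (gR m R p q) i = p i" using xa pp by simp
    show "\<And>i. i < m \<Longrightarrow> gR m R p q i = max 0 (payoff m (unit_vec i) R q - payoff m p R q)"
      by (simp add: gR_def)
    show "payoff m p R q = (\<Sum>i<m. p i * payoff m (unit_vec i) R q)" by (rule payoff_rows)
  qed
  have colNE: "\<forall>j<m. payoff m p C (unit_vec j) \<le> payoff m p C q"
  proof (rule nmap_fix[where g = "gC m C p q"])
    show "prob_vec m q" using qx qq by simp
    show "\<And>i. i < m \<Longrightarrow> nmap m q (gC m C p q) i = q i" using xb qq by simp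
    show "\<And>i. i < m \<Longrightarrow> gC m C p q i = max 0 (payoff m p C (unit_vec i) - payoff m p C q)"
      by (simp add: gC_def)
    show "payoff m p C q = (\<Sum>i<m. q i * payoff m p C (unit_vec i))"
      by (subst payoff_cols) (simp add: mult.commute)
  qed
  have "nash_equilibrium m R C p q"
    unfolding nash_equilibrium_def using px qx pp qq rowNE colNE by simp
  then show ?thesis by blast
qed



lemma P_upper:
  fixes D P Q :: real
  assumes D: "0 < D" "D \<le> 1/10" and P: "0 \<le> P" "P \<le> 1" and Q: "0 \<le> Q" "Q \<le> 1"
  and rn: "2*D*(1-Q) \<le> P*Q + (1-P)*(2*D)*(1-Q) + D^2"
  and cn: "P \<le> Q*(D*P + 2*D*(1-P)) + (1-Q)*P + D^2"
  shows "P < 4*D"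
proof (rule ccontr)
  assume "\<not> P < 4*D" then have P4: "P \<ge> 4*D" by simp
  have "Q*(P*(1+D) - 2*D) \<le> D^2" using cn by (simp add: algebra_simps)
  moreover have X: "P*(1+D) - 2*D \<ge> 2*D"
  proof -
    have "P*D \<ge> 0" using P D by simp
    then show ?thesis using P4 by (simp add: algebra_simps)
  qed
  moreover have "Q * (2*D) \<le> Q*(P*(1+D) - 2*D)" using X Q by (intro mult_left_mono) auto
  ultimately have "Q * (2*D) \<le> D^2" by linarith
  then have Qs: "Q \<le> D/2" using D by (simp add: power2_eq_square) 
  have "P*(2*D*(1-Q) - Q) \<le> D^2" using rn by (simp add: algebra_simps)
  moreover have "2*D*(1-Q) - Q \<ge> D" using Qs D
  proof -
    have "2*D*Q \<le> 2*D*(D/2)" using Qs D by (intro mult_left_mono) auto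
    moreover have "D*D \<le> D*(1/10)" using D by (intro mult_left_mono) auto
    moreover have "2*D*(1-Q) - Q = 2*D - 2*D*Q - Q" by (simp add: algebra_simps)
    ultimately show ?thesis using Qs D by linarith
  qed
  moreover have "P * D \<le> P*(2*D*(1-Q) - Q)" using P \<open>2*D*(1-Q) - Q \<ge> D\<close> by (intro mult_left_mono) auto
  ultimately have "P * D \<le> D^2" by linarith
  then have "P \<le> D" using D by (simp add: power2_eq_square)
  then show False using P4 D by simp
qed

lemma P_lower:
  fixes D P Q :: real
  assumes D: "0 < D" "D \<le> 1/10" and P: "0 \<le> P" "P \<le> 1" and Q: "0 \<le> Q" "Q \<le> 1"
  and r0: "(1-D)*Q \<le> P*Q + (1-P)*(2*D)*(1-Q) + D^2"
  and c0: "2*D*(1-P) \<le> Q*(D*P + 2*D*(1-P)) + (1-Q)*P + D^2"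
  shows "D/2 \<le> P"
proof (rule ccontr)
  assume "\<not> D/2 \<le> P" then have Ps: "P < D/2" by simp
  have DD: "D*D \<le> D*(1/10)" using D by (intro mult_left_mono) auto
  have DP: "D*P \<le> D*(D/2)" using D Ps by (intro mult_left_mono) auto
  have "2*D*(1-P) - P = 2*D - 2*(D*P) - P" by (simp add: algebra_simps)
  then have X: "2*D*(1-P) - P \<ge> 7/5*D" using DD DP Ps by linarith
  have c0': "(1-Q)*(2*D*(1-P) - P) \<le> Q*(D*P) + D*D"
    using c0 by (simp add: algebra_simps power2_eq_square)
  have "Q*(D*P) \<le> 1*(D*P)" using Q D P by (intro mult_right_mono) auto
  moreover have "(1-Q)*(7/5*D) \<le> (1-Q)*(2*D*(1-P) - P)" using X Q by (intro mult_left_mono) auto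
  ultimately have "(1-Q)*(7/5*D) \<le> 3/2*(D*D)" using c0' DP by linarith
  then have "D*((1-Q)*(7/5)) \<le> D*(3/2*D)" by (simp add: algebra_simps)
  then have "(1-Q)*(7/5) \<le> 3/2*D" using D by (simp add: mult_le_cancel_left)
  moreover have "(1-Q)*(7/5) = 7/5 - 7/5*Q" by (simp add: field_simps)
  ultimately have Qb: "1 - Q \<le> 15/140" using D by linarith
  have r0': "Q - D*Q \<le> P*Q + (1-P)*(2*D*(1-Q)) + D*D"
    using r0 by (simp add: algebra_simps power2_eq_square)
  have "P*Q \<le> P*1" using P Q by (intro mult_left_mono) auto
  moreover have "(1-P)*(2*D*(1-Q)) \<le> 1*(2*D*(1-Q))" using P Q D by (intro mult_right_mono) auto
  moreover have "2*D*(1-Q) \<le> 2*D*(15/140)" using D Qb by (intro mult_left_mono) auto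
  moreover have "D*Q \<le> D*1" using D Q by (intro mult_left_mono) auto
  ultimately show False using r0' Qb Ps DD D by linarith
qed

lemma Q_upper:
  fixes D P Q :: real
  assumes D: "0 < D" "D \<le> 1/10" and P: "0 \<le> P" "P < 4*D" and Q: "0 \<le> Q" "Q \<le> 1"
  and r0: "(1-D)*Q \<le> P*Q + (1-P)*(2*D)*(1-Q) + D^2"
  shows "Q < 4*D"
proof (rule ccontr)
  assume "\<not> Q < 4*D" then have Q4: "Q \<ge> 4*D" by simp
  define c where "c = 1 + D - P - 2*D*P"
  have r0': "Q*c \<le> 2*D*(1-P) + D*D"
    using r0 unfolding c_def by (simp add: algebra_simps power2_eq_square)
  have "P*(1+2*D) \<le> 4*D*(1+2*D)" using P D by (intro mult_right_mono) auto
  then have cb: "c \<ge> 1 - 3*D - 8*(D*D)" unfolding c_def by (simp add: algebra_simps)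
  have DD: "D*D \<le> D*(1/10)" using D by (intro mult_left_mono) auto
  have DDD: "D*(D*D) \<le> D*(D*(1/10))" using D DD by (intro mult_left_mono) auto
  have c0: "c \<ge> 0" using cb DD D by linarith
  have f1: "4*D*c \<le> Q*c" using Q4 c0 by (intro mult_right_mono) auto
  have f2: "4*D*(1 - 3*D - 8*(D*D)) \<le> 4*D*c" using cb D by (intro mult_left_mono) auto
  have f3: "4*D*(1 - 3*D - 8*(D*D)) = 4*D - 12*(D*D) - 32*(D*(D*D))" by (simp add: algebra_simps)
  have f4: "D*P \<ge> 0" using D P by simp
  have f5: "2*D*(1-P) = 2*D - 2*(D*P)" by (simp add: algebra_simps)
  have g2: "4*D - 12*(D*D) - 32*(D*(D*D)) \<le> 4*D*c" using f2 f3 by linarith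
  have g5: "Q*c \<le> 2*D - 2*(D*P) + D*D" using r0' f5 by linarith
  from f1 g2 f4 g5 DD DDD D show False by linarith
qed

lemma Q_lower:
  fixes D P Q :: real
  assumes D: "0 < D" "D \<le> 1/10" and P: "0 \<le> P" "P \<le> 1" and Q: "0 \<le> Q" "Q \<le> 1"
  and rn: "2*D*(1-Q) \<le> P*Q + (1-P)*(2*D)*(1-Q) + D^2"
  and c0: "2*D*(1-P) \<le> Q*(D*P + 2*D*(1-P)) + (1-Q)*P + D^2"
  shows "D/2 \<le> Q"
proof (rule ccontr)
  assume "\<not> D/2 \<le> Q" then have Qs: "Q < D/2" by simp
  have DD: "D*D \<le> D*(1/10)" using D by (intro mult_left_mono) auto
  have "P*(2*D*(1-Q) - Q) \<le> D^2" using rn by (simp add: algebra_simps)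
  moreover have Y: "2*D*(1-Q) - Q \<ge> D"
  proof -
    have "2*D*Q \<le> 2*D*(D/2)" using Qs D by (intro mult_left_mono) auto
    moreover have "2*D*(1-Q) - Q = 2*D - 2*D*Q - Q" by (simp add: algebra_simps)
    ultimately show ?thesis using Qs D DD by linarith
  qed
  moreover have "P * D \<le> P*(2*D*(1-Q) - Q)" using P Y by (intro mult_left_mono) auto
  ultimately have "P * D \<le> D*D" by (simp add: power2_eq_square)
  then have PD: "P \<le> D" using D by (simp add: mult.commute)
  have DP: "D*P \<le> D*D" using D PD by (intro mult_left_mono) auto
  have "2*D*(1-P) - P = 2*D - 2*(D*P) - P" by (simp add: algebra_simps)
  then have X: "2*D*(1-P) - P \<ge> 4/5*D" using DD DP PD by linarith
  have c0': "(1-Q)*(2*D*(1-P) - P) \<le> Q*(D*P) + D*D"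
    using c0 by (simp add: algebra_simps power2_eq_square)
  have "Q*(D*P) \<le> 1*(D*P)" using Q D P by (intro mult_right_mono) auto
  moreover have "(1-Q)*(4/5*D) \<le> (1-Q)*(2*D*(1-P) - P)" using X Q by (intro mult_left_mono) auto
  moreover have "(1-Q)*(4/5*D) = 4/5*D - 4/5*(D*Q)" by (simp add: field_simps)
  moreover have "D*Q \<le> D*(D/2)" using D Qs by (intro mult_left_mono) auto
  ultimately show False using c0' DP DD D by linarith
qed



theorem lemma2:
  fixes n :: nat and \<Delta> :: real and \<alpha> \<gamma> :: "nat \<Rightarrow> nat \<Rightarrow> real"
    and R C :: "nat \<Rightarrow> nat \<Rightarrow> real"
  assumes "0 < \<Delta>" and "\<Delta> \<le> 1/10" and "n \<ge> 1"
    and "\<And>i j. i < n \<Longrightarrow> j < n \<Longrightarrow> -\<Delta> \<le> \<alpha> i j \<and> \<alpha> i j \<le> 0"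
    and "\<And>i j. i < n \<Longrightarrow> j < n \<Longrightarrow> 0 \<le> \<gamma> i j \<and> \<gamma> i j \<le> \<Delta>"
    and "R = (\<lambda>i j. if i < n \<and> j < n then 1 + \<alpha> i j
                   else if i < n \<and> j = n then 0
                   else if i = n \<and> j < n then 0
                   else if i = n \<and> j = n then 2 * \<Delta> else 0)"
    and "C = (\<lambda>i j. if i < n \<and> j < n then \<gamma> i j
                   else if i < n \<and> j = n then 1
                   else if i = n \<and> j < n then 2 * \<Delta>
                   else 0)"
  shows "strong_approx_stable (n + 1) R C (\<Delta>^2) (4 * \<Delta>) \<and>
         (\<forall>p q. eps_equilibrium (n + 1) R C (\<Delta>^2) p q \<longrightarrow>
            \<Delta> / 2 \<le> (\<Sum>i<n. p i) \<and> (\<Sum>i<n. p i) \<le> 4 * \<Delta> \<and>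
            \<Delta> / 2 \<le> (\<Sum>j<n. q j) \<and> (\<Sum>j<n. q j) \<le> 4 * \<Delta>)"
proof -
  note D = assms(1,2)
  note al = assms(4) and ga = assms(5) and Rd = assms(6) and Cd = assms(7)
  have n0: "0 < n" using assms(3) by simp
  have Suc: "n + 1 = Suc n" by simp
  have key: "\<Delta> / 2 \<le> (\<Sum>i<n. p i) \<and> (\<Sum>i<n. p i) \<le> 4 * \<Delta> \<and>
            \<Delta> / 2 \<le> (\<Sum>j<n. q j) \<and> (\<Sum>j<n. q j) \<le> 4 * \<Delta>"
    if eq: "eps_equilibrium (n + 1) R C (\<Delta>^2) p q" for p q
  proof -
    define P where "P = (\<Sum>i<n. p i)"
    define Q where "Q = (\<Sum>j<n. q j)"
    have pv: "prob_vec (n+1) p" and qv: "prob_vec (n+1) q"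
      and rowc: "\<And>i. i < n+1 \<Longrightarrow> payoff (n+1) (unit_vec i) R q \<le> payoff (n+1) p R q + \<Delta>^2"
      and colc: "\<And>j. j < n+1 \<Longrightarrow> payoff (n+1) p C (unit_vec j) \<le> payoff (n+1) p C q + \<Delta>^2"
      using eq unfolding eps_equilibrium_def by auto
    have p0: "\<And>i. i < n+1 \<Longrightarrow> 0 \<le> p i" and q0: "\<And>i. i < n+1 \<Longrightarrow> 0 \<le> q i"
      using pv qv unfolding prob_vec_def by auto
    have pn: "p n = 1 - P" using pv unfolding prob_vec_def P_def Suc by simp
    have qn: "q n = 1 - Q" using qv unfolding prob_vec_def Q_def Suc by simp
    have P0: "0 \<le> P" unfolding P_def by (rule sum_nonneg) (simp add: p0)
    have Q0: "0 \<le> Q" unfolding Q_def by (rule sum_nonneg) (simp add: q0)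
    have P1: "P \<le> 1" using pn p0[of n] by simp
    have Q1: "Q \<le> 1" using qn q0[of n] by simp
    define u where "u i = payoff (n+1) (unit_vec i) R q" for i
    have u_lt: "u i = (\<Sum>j<n. (1 + \<alpha> i j) * q j)" if "i < n" for i
      unfolding u_def using that by (simp add: payoff_unit_row Suc Rd)
    have u_n: "u n = 2*\<Delta>*(1-Q)"
      unfolding u_def by (simp add: payoff_unit_row Suc Rd qn)
    have u_up: "u i \<le> Q" if "i < n" for i
    proof -
      have "(\<Sum>j<n. (1 + \<alpha> i j) * q j) \<le> (\<Sum>j<n. 1 * q j)"
        using al[OF that] q0 by (intro sum_mono mult_right_mono) auto
      then show ?thesis using u_lt[OF that] Q_def by simp
    qed
    have u_lo: "(1-\<Delta>)*Q \<le> u i" if "i < n" for i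
    proof -
      have "(\<Sum>j<n. (1-\<Delta>) * q j) \<le> (\<Sum>j<n. (1 + \<alpha> i j) * q j)"
        using al[OF that] q0 by (intro sum_mono mult_right_mono) auto
      then show ?thesis using u_lt[OF that] Q_def by (simp add: sum_distrib_left)
    qed
    have X: "payoff (n+1) p R q = (\<Sum>i<n. p i * u i) + (1-P) * u n"
      unfolding u_def by (subst payoff_rows) (simp add: Suc pn)
    have "(\<Sum>i<n. p i * u i) \<le> (\<Sum>i<n. p i * Q)"
      using u_up p0 by (intro sum_mono mult_left_mono) auto
    then have Xb: "payoff (n+1) p R q \<le> P*Q + (1-P)*(2*\<Delta>)*(1-Q)"
      using X u_n by (simp add: P_def sum_distrib_right mult.assoc)
    define v where "v j = payoff (n+1) p C (unit_vec j)" for j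
    have v_lt: "v j = (\<Sum>i<n. p i * \<gamma> i j) + (1-P)*(2*\<Delta>)" if "j < n" for j
      unfolding v_def using that by (simp add: payoff_unit_col Suc Cd pn)
    have v_n: "v n = P"
      unfolding v_def by (simp add: payoff_unit_col Suc Cd P_def)
    have v_up: "v j \<le> \<Delta>*P + 2*\<Delta>*(1-P)" if "j < n" for j
    proof -
      have "(\<Sum>i<n. p i * \<gamma> i j) \<le> (\<Sum>i<n. p i * \<Delta>)"
        using ga that p0 by (intro sum_mono mult_left_mono) auto
      also have "\<dots> = P * \<Delta>" by (simp add: P_def sum_distrib_right)
      finally show ?thesis using v_lt[OF that] by (simp add: algebra_simps)
    qed
    have v_lo: "2*\<Delta>*(1-P) \<le> v j" if "j < n" for j
    proof -
      have "0 \<le> (\<Sum>i<n. p i * \<gamma> i j)"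
        using ga that p0 by (intro sum_nonneg mult_nonneg_nonneg) auto
      then show ?thesis using v_lt[OF that] by simp
    qed
    have Y: "payoff (n+1) p C q = (\<Sum>j<n. v j * q j) + P * (1-Q)"
    proof -
      have vn': "payoff (Suc n) p C (unit_vec n) = P" using v_n unfolding v_def Suc .
      show ?thesis unfolding v_def by (subst payoff_cols) (simp add: Suc qn vn')
    qed
    have "(\<Sum>j<n. v j * q j) \<le> (\<Sum>j<n. (\<Delta>*P + 2*\<Delta>*(1-P)) * q j)"
      using v_up q0 by (intro sum_mono mult_right_mono) auto
    also have "\<dots> = (\<Delta>*P + 2*\<Delta>*(1-P)) * Q" by (simp add: Q_def sum_distrib_left)
    finally have Yb: "payoff (n+1) p C q \<le> Q*(\<Delta>*P + 2*\<Delta>*(1-P)) + (1-Q)*P"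
      using Y by (simp add: algebra_simps)
    have r0: "(1-\<Delta>)*Q \<le> P*Q + (1-P)*(2*\<Delta>)*(1-Q) + \<Delta>^2"
      using u_lo[OF n0] rowc[of 0] Xb unfolding u_def by simp
    have rn: "2*\<Delta>*(1-Q) \<le> P*Q + (1-P)*(2*\<Delta>)*(1-Q) + \<Delta>^2"
      using u_n rowc[of n] Xb unfolding u_def by simp
    have c0: "2*\<Delta>*(1-P) \<le> Q*(\<Delta>*P + 2*\<Delta>*(1-P)) + (1-Q)*P + \<Delta>^2"
      using v_lo[OF n0] colc[of 0] Yb unfolding v_def by simp
    have cn: "P \<le> Q*(\<Delta>*P + 2*\<Delta>*(1-P)) + (1-Q)*P + \<Delta>^2"
      using v_n colc[of n] Yb unfolding v_def by simp
    have Pu: "P < 4*\<Delta>" by (rule P_upper[OF D P0 P1 Q0 Q1 rn cn])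
    have Pl: "\<Delta>/2 \<le> P" by (rule P_lower[OF D P0 P1 Q0 Q1 r0 c0])
    have Qu: "Q < 4*\<Delta>" by (rule Q_upper[OF D P0 Pu Q0 Q1 r0])
    have Ql: "\<Delta>/2 \<le> Q" by (rule Q_lower[OF D P0 P1 Q0 Q1 rn c0])
    show ?thesis using Pu Pl Qu Ql unfolding P_def Q_def by simp
  qed
  obtain ps qs where ne: "nash_equilibrium (n+1) R C ps qs"
    using nash_exists[of "n+1" R C] by auto
  have ne_eps: "eps_equilibrium (n + 1) R C (\<Delta>^2) ps qs"
    using ne unfolding nash_equilibrium_def eps_equilibrium_def
    by (smt (verit) zero_le_power2)
  have dist: "strat_dist (n+1) x y \<le> 4*\<Delta>"
    if x: "prob_vec (n+1) x" and y: "prob_vec (n+1) y"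
      and bx: "(\<Sum>i<n. x i) \<le> 4*\<Delta>" and byy: "(\<Sum>i<n. y i) \<le> 4*\<Delta>" for x y
  proof -
    define X where "X = (\<Sum>i<n. x i)"
    define Y where "Y = (\<Sum>i<n. y i)"
    have xn: "x n = 1 - X" using x unfolding prob_vec_def X_def Suc by simp
    have yn: "y n = 1 - Y" using y unfolding prob_vec_def Y_def Suc by simp
    have "(\<Sum>i<n. \<bar>x i - y i\<bar>) \<le> (\<Sum>i<n. x i + y i)"
    proof (rule sum_mono)
      fix i assume "i \<in> {..<n}"
      then have "0 \<le> x i" "0 \<le> y i" using x y unfolding prob_vec_def by auto
      then show "\<bar>x i - y i\<bar> \<le> x i + y i" by linarith
    qed
    then have "(\<Sum>i<n. \<bar>x i - y i\<bar>) \<le> X + Y" by (simp add: sum.distrib X_def Y_def)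
    then have "(\<Sum>i<n+1. \<bar>x i - y i\<bar>) \<le> X + Y + \<bar>Y - X\<bar>"
      by (simp add: Suc xn yn)
    then show ?thesis unfolding strat_dist_def using bx byy X_def Y_def by linarith
  qed
  have stab: "strong_approx_stable (n + 1) R C (\<Delta>^2) (4 * \<Delta>)"
    unfolding strong_approx_stable_def
  proof (intro exI conjI allI impI)
    show "nash_equilibrium (n + 1) R C ps qs" by (rule ne)
    fix p q assume eq: "eps_equilibrium (n + 1) R C (\<Delta>^2) p q"
    have pv: "prob_vec (n+1) p" "prob_vec (n+1) q" using eq unfolding eps_equilibrium_def by auto
    have sv: "prob_vec (n+1) ps" "prob_vec (n+1) qs" using ne unfolding nash_equilibrium_def by auto
    show "profile_dist (n + 1) (p, q) (ps, qs) \<le> 4 * \<Delta>"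
      unfolding profile_dist_def using key[OF eq] key[OF ne_eps]
      by (simp del: One_nat_def add: dist[OF pv(1) sv(1)] dist[OF pv(2) sv(2)])
  qed
  show ?thesis using stab key by blast
qed


end
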